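(* (Provably in $\mathsf{Z}^-_{\mathrm{FTM}\omega}$.) Let $E$ be a strict well-ordering of a set $U$. Then there is an ordinal $\lambda$ and an order isomorphism of $\langle U,E\rangle$ onto $\langle\lambda,\in\rangle$.
   Context: $\mathsf{Z}^-_{\mathrm{FTM}\omega}$ is Zermelo set theory without Power Set and Choice (Extensionality, Pairing, Union, Infinity, Regularity, Separation) plus: (FC) every set $X$ has a superset $Y$ such that every finite $x\subseteq Y$ belongs to $Y$; (TS) every set has a transitive superset; (MC) every set binary relation $A$ that is well-founded and extensional admits a transitive set $X$ and a bijection $\eta$ from its field onto $X$ with $jAk\iff\eta(j)\in\eta(k)$; (Count) every set admits an injection into $\omega$. *)

theory Defs
  imports Main
begin

text \<open>
  A first-order structure for the language of set theory is a type 'v together with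
  a binary relation el, where el x y means x is an element of y.
\<close>

datatype fm = FMem nat nat | FEq nat nat | FNeg fm | FConj fm fm | FEx nat fm

primrec sat :: "('v \<Rightarrow> 'v \<Rightarrow> bool) \<Rightarrow> (nat \<Rightarrow> 'v) \<Rightarrow> fm \<Rightarrow> bool" where
  "sat el env (FMem i j) = el (env i) (env j)"
| "sat el env (FEq i j) = (env i = env j)"
| "sat el env (FNeg p) = (\<not> sat el env p)"
| "sat el env (FConj p q) = (sat el env p \<and> sat el env q)"
| "sat el env (FEx i p) = (\<exists>z. sat el (env(i := z)) p)"

definition subset_m :: "('v \<Rightarrow> 'v \<Rightarrow> bool) \<Rightarrow> 'v \<Rightarrow> 'v \<Rightarrow> bool" where
  "subset_m el x y \<longleftrightarrow> (\<forall>z. el z x \<longrightarrow> el z y)"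

definition empty_m :: "('v \<Rightarrow> 'v \<Rightarrow> bool) \<Rightarrow> 'v \<Rightarrow> bool" where
  "empty_m el e \<longleftrightarrow> (\<forall>z. \<not> el z e)"

definition nonempty_m :: "('v \<Rightarrow> 'v \<Rightarrow> bool) \<Rightarrow> 'v \<Rightarrow> bool" where
  "nonempty_m el x \<longleftrightarrow> (\<exists>z. el z x)"

definition upair_m :: "('v \<Rightarrow> 'v \<Rightarrow> bool) \<Rightarrow> 'v \<Rightarrow> 'v \<Rightarrow> 'v \<Rightarrow> bool" where
  "upair_m el p a b \<longleftrightarrow> (\<forall>z. el z p \<longleftrightarrow> z = a \<or> z = b)"

definition opair_m :: "('v \<Rightarrow> 'v \<Rightarrow> bool) \<Rightarrow> 'v \<Rightarrow> 'v \<Rightarrow> 'v \<Rightarrow> bool" where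
  "opair_m el p a b \<longleftrightarrow> (\<forall>z. el z p \<longleftrightarrow> upair_m el z a a \<or> upair_m el z a b)"

definition union_m :: "('v \<Rightarrow> 'v \<Rightarrow> bool) \<Rightarrow> 'v \<Rightarrow> 'v \<Rightarrow> bool" where
  "union_m el u x \<longleftrightarrow> (\<forall>z. el z u \<longleftrightarrow> (\<exists>y. el y x \<and> el z y))"

definition succ_m :: "('v \<Rightarrow> 'v \<Rightarrow> bool) \<Rightarrow> 'v \<Rightarrow> 'v \<Rightarrow> bool" where
  "succ_m el s x \<longleftrightarrow> (\<forall>z. el z s \<longleftrightarrow> el z x \<or> z = x)"

definition trans_m :: "('v \<Rightarrow> 'v \<Rightarrow> bool) \<Rightarrow> 'v \<Rightarrow> bool" where
  "trans_m el x \<longleftrightarrow> (\<forall>y z. el z y \<and> el y x \<longrightarrow> el z x)"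

definition relation_m :: "('v \<Rightarrow> 'v \<Rightarrow> bool) \<Rightarrow> 'v \<Rightarrow> bool" where
  "relation_m el R \<longleftrightarrow> (\<forall>p. el p R \<longrightarrow> (\<exists>a b. opair_m el p a b))"

definition rel_m :: "('v \<Rightarrow> 'v \<Rightarrow> bool) \<Rightarrow> 'v \<Rightarrow> 'v \<Rightarrow> 'v \<Rightarrow> bool" where
  "rel_m el R a b \<longleftrightarrow> (\<exists>p. el p R \<and> opair_m el p a b)"

definition in_field_m :: "('v \<Rightarrow> 'v \<Rightarrow> bool) \<Rightarrow> 'v \<Rightarrow> 'v \<Rightarrow> bool" where
  "in_field_m el R j \<longleftrightarrow> (\<exists>k. rel_m el R j k \<or> rel_m el R k j)"

definition fun_m :: "('v \<Rightarrow> 'v \<Rightarrow> bool) \<Rightarrow> 'v \<Rightarrow> ('v \<Rightarrow> bool) \<Rightarrow> ('v \<Rightarrow> bool) \<Rightarrow> bool" where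
  "fun_m el f D B \<longleftrightarrow> relation_m el f
     \<and> (\<forall>a b c. rel_m el f a b \<and> rel_m el f a c \<longrightarrow> b = c)
     \<and> (\<forall>a. (\<exists>b. rel_m el f a b) \<longleftrightarrow> D a)
     \<and> (\<forall>a b. rel_m el f a b \<longrightarrow> B b)"

definition inj_m :: "('v \<Rightarrow> 'v \<Rightarrow> bool) \<Rightarrow> 'v \<Rightarrow> ('v \<Rightarrow> bool) \<Rightarrow> ('v \<Rightarrow> bool) \<Rightarrow> bool" where
  "inj_m el f D B \<longleftrightarrow> fun_m el f D B
     \<and> (\<forall>a a' b. rel_m el f a b \<and> rel_m el f a' b \<longrightarrow> a = a')"

definition bij_m :: "('v \<Rightarrow> 'v \<Rightarrow> bool) \<Rightarrow> 'v \<Rightarrow> ('v \<Rightarrow> bool) \<Rightarrow> ('v \<Rightarrow> bool) \<Rightarrow> bool" where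
  "bij_m el f D B \<longleftrightarrow> inj_m el f D B \<and> (\<forall>b. B b \<longrightarrow> (\<exists>a. rel_m el f a b))"

definition strict_wo_m :: "('v \<Rightarrow> 'v \<Rightarrow> bool) \<Rightarrow> ('v \<Rightarrow> 'v \<Rightarrow> bool) \<Rightarrow> 'v \<Rightarrow> bool" where
  "strict_wo_m el r U \<longleftrightarrow>
     (\<forall>a. el a U \<longrightarrow> \<not> r a a)
   \<and> (\<forall>a b c. el a U \<and> el b U \<and> el c U \<and> r a b \<and> r b c \<longrightarrow> r a c)
   \<and> (\<forall>a b. el a U \<and> el b U \<longrightarrow> r a b \<or> a = b \<or> r b a)
   \<and> (\<forall>S. subset_m el S U \<and> nonempty_m el S \<longrightarrow> (\<exists>m. el m S \<and> (\<forall>y. el y S \<longrightarrow> \<not> r y m)))"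

definition strict_wellordering_m :: "('v \<Rightarrow> 'v \<Rightarrow> bool) \<Rightarrow> 'v \<Rightarrow> 'v \<Rightarrow> bool" where
  "strict_wellordering_m el U E \<longleftrightarrow>
     relation_m el E \<and> (\<forall>a b. rel_m el E a b \<longrightarrow> el a U \<and> el b U)
   \<and> strict_wo_m el (rel_m el E) U"

definition ordinal_m :: "('v \<Rightarrow> 'v \<Rightarrow> bool) \<Rightarrow> 'v \<Rightarrow> bool" where
  "ordinal_m el x \<longleftrightarrow> trans_m el x \<and> strict_wo_m el el x"

definition natnum_m :: "('v \<Rightarrow> 'v \<Rightarrow> bool) \<Rightarrow> 'v \<Rightarrow> bool" where
  "natnum_m el n \<longleftrightarrow> ordinal_m el n
     \<and> (\<forall>m. el m n \<or> m = n \<longrightarrow> empty_m el m \<or> (\<exists>k. succ_m el m k))"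

definition omega_m :: "('v \<Rightarrow> 'v \<Rightarrow> bool) \<Rightarrow> 'v \<Rightarrow> bool" where
  "omega_m el w \<longleftrightarrow> (\<forall>z. el z w \<longleftrightarrow> natnum_m el z)"

definition finite_m :: "('v \<Rightarrow> 'v \<Rightarrow> bool) \<Rightarrow> 'v \<Rightarrow> bool" where
  "finite_m el x \<longleftrightarrow> (\<exists>n f. natnum_m el n \<and> bij_m el f (\<lambda>a. el a x) (\<lambda>b. el b n))"

definition wf_m :: "('v \<Rightarrow> 'v \<Rightarrow> bool) \<Rightarrow> 'v \<Rightarrow> bool" where
  "wf_m el A \<longleftrightarrow> (\<forall>S. (\<forall>z. el z S \<longrightarrow> in_field_m el A z) \<and> nonempty_m el S
       \<longrightarrow> (\<exists>m. el m S \<and> (\<forall>y. el y S \<longrightarrow> \<not> rel_m el A y m)))"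

definition extensional_m :: "('v \<Rightarrow> 'v \<Rightarrow> bool) \<Rightarrow> 'v \<Rightarrow> bool" where
  "extensional_m el A \<longleftrightarrow> (\<forall>j k. in_field_m el A j \<and> in_field_m el A k
       \<and> (\<forall>i. rel_m el A i j \<longleftrightarrow> rel_m el A i k) \<longrightarrow> j = k)"

definition Zminus_FTMw :: "('v \<Rightarrow> 'v \<Rightarrow> bool) \<Rightarrow> bool" where
  "Zminus_FTMw el \<longleftrightarrow>
     \<comment> \<open>Extensionality\<close>
     (\<forall>x y. (\<forall>z. el z x \<longleftrightarrow> el z y) \<longrightarrow> x = y)
     \<comment> \<open>Pairing\<close>
   \<and> (\<forall>a b. \<exists>p. upair_m el p a b)
     \<comment> \<open>Union\<close>
   \<and> (\<forall>x. \<exists>u. union_m el u x)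
     \<comment> \<open>Infinity\<close>
   \<and> (\<exists>w. (\<exists>e. empty_m el e \<and> el e w) \<and> (\<forall>x. el x w \<longrightarrow> (\<exists>s. succ_m el s x \<and> el s w)))
     \<comment> \<open>Regularity\<close>
   \<and> (\<forall>x. nonempty_m el x \<longrightarrow> (\<exists>y. el y x \<and> (\<forall>z. el z y \<longrightarrow> \<not> el z x)))
     \<comment> \<open>Separation schema (variable 0 is the separated variable, others are parameters)\<close>
   \<and> (\<forall>\<phi> env x. \<exists>y. \<forall>z. el z y \<longleftrightarrow> el z x \<and> sat el (env(0 := z)) \<phi>)
     \<comment> \<open>(FC)\<close>
   \<and> (\<forall>X. \<exists>Y. subset_m el X Y \<and> (\<forall>x. finite_m el x \<and> subset_m el x Y \<longrightarrow> el x Y))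
     \<comment> \<open>(TS)\<close>
   \<and> (\<forall>x. \<exists>t. subset_m el x t \<and> trans_m el t)
     \<comment> \<open>(MC)\<close>
   \<and> (\<forall>A. relation_m el A \<and> wf_m el A \<and> extensional_m el A \<longrightarrow>
        (\<exists>X \<eta>. trans_m el X \<and> bij_m el \<eta> (in_field_m el A) (\<lambda>x. el x X)
           \<and> (\<forall>j k x y. rel_m el \<eta> j x \<and> rel_m el \<eta> k y \<longrightarrow> (rel_m el A j k \<longleftrightarrow> el x y))))
     \<comment> \<open>(Count)\<close>
   \<and> (\<forall>x. \<exists>w f. omega_m el w \<and> inj_m el f (\<lambda>a. el a x) (\<lambda>b. el b w))"

definition order_iso_m :: "('v \<Rightarrow> 'v \<Rightarrow> bool) \<Rightarrow> 'v \<Rightarrow> 'v \<Rightarrow> 'v \<Rightarrow> 'v \<Rightarrow> bool" where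
  "order_iso_m el U E lam f \<longleftrightarrow> bij_m el f (\<lambda>a. el a U) (\<lambda>b. el b lam)
     \<and> (\<forall>a b x y. rel_m el f a x \<and> rel_m el f b y \<longrightarrow> (rel_m el E a b \<longleftrightarrow> el x y))"

end

theory Submission
  imports Defs
begin

lemma opair_inj:
  assumes pair: "\<forall>a b. \<exists>p. upair_m el p a b"
    and h1: "opair_m el p a b" and h2: "opair_m el p c d"
  shows "a = c \<and> b = d"
proof -
  obtain s where s: "upair_m el s a a" using pair by blast
  obtain t where t: "upair_m el t a b" using pair by blast
  obtain t' where t': "upair_m el t' c d" using pair by blast
  have sp: "el s p" using h1 s unfolding opair_m_def by blast
  have tp: "el t p" using h1 t unfolding opair_m_def by blast
  have t'p: "el t' p" using h2 t' unfolding opair_m_def by blast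
  have ac: "a = c" using sp h2 s unfolding opair_m_def upair_m_def by metis
  have A: "upair_m el t c c \<or> upair_m el t c d" using tp h2 unfolding opair_m_def by blast
  have B: "upair_m el t' a a \<or> upair_m el t' a b" using t'p h1 unfolding opair_m_def by blast
  show ?thesis using A B t t' ac unfolding upair_m_def by metis
qed

lemma opair_ex:
  assumes ext: "\<forall>x y. (\<forall>z. el z x \<longleftrightarrow> el z y) \<longrightarrow> x = y"
    and pair: "\<forall>a b. \<exists>p. upair_m el p a b"
  shows "\<exists>q. opair_m el q a b"
proof -
  obtain s where s: "upair_m el s a a" using pair by blast
  obtain t where t: "upair_m el t a b" using pair by blast
  obtain q where q: "upair_m el q s t" using pair by blast
  have u: "upair_m el z x y \<Longrightarrow> upair_m el z' x y \<Longrightarrow> z = z'" for z z' x y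
    using ext unfolding upair_m_def by metis
  have "opair_m el q a b"
    unfolding opair_m_def
  proof (intro allI iffI)
    fix z assume "el z q"
    then have "z = s \<or> z = t" using q unfolding upair_m_def by blast
    then show "upair_m el z a a \<or> upair_m el z a b" using s t by blast
  next
    fix z assume "upair_m el z a a \<or> upair_m el z a b"
    then have "z = s \<or> z = t" using s t u by blast
    then show "el z q" using q unfolding upair_m_def by blast
  qed
  then show ?thesis by blast
qed

theorem lemma9p3:
  fixes el :: "'v \<Rightarrow> 'v \<Rightarrow> bool"
  assumes "Zminus_FTMw el"
  shows "\<forall>U E. strict_wellordering_m el U E \<longrightarrow>
           (\<exists>lam f. ordinal_m el lam \<and> order_iso_m el U E lam f)"
proof (intro allI impI)
  fix U E assume swo: "strict_wellordering_m el U E"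
  note Z = assms[unfolded Zminus_FTMw_def]
  have ext: "\<forall>x y. (\<forall>z. el z x \<longleftrightarrow> el z y) \<longrightarrow> x = y"
    and pair: "\<forall>a b. \<exists>p. upair_m el p a b"
    and inf: "\<exists>w. (\<exists>e. empty_m el e \<and> el e w) \<and> (\<forall>x. el x w \<longrightarrow> (\<exists>s. succ_m el s x \<and> el s w))"
    and reg: "\<forall>x. nonempty_m el x \<longrightarrow> (\<exists>y. el y x \<and> (\<forall>z. el z y \<longrightarrow> \<not> el z x))"
    and mc: "\<forall>A. relation_m el A \<and> wf_m el A \<and> extensional_m el A \<longrightarrow>
        (\<exists>X \<eta>. trans_m el X \<and> bij_m el \<eta> (in_field_m el A) (\<lambda>x. el x X)
           \<and> (\<forall>j k x y. rel_m el \<eta> j x \<and> rel_m el \<eta> k y \<longrightarrow> (rel_m el A j k \<longleftrightarrow> el x y)))"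
    using Z by (auto simp only:)
  obtain e where e: "\<And>z. \<not> el z e" using inf unfolding empty_m_def by blast
  have relE: "relation_m el E" and EU: "\<And>a b. rel_m el E a b \<Longrightarrow> el a U \<and> el b U"
    and irr: "\<And>a. el a U \<Longrightarrow> \<not> rel_m el E a a"
    and tr: "\<And>a b c. el a U \<Longrightarrow> el b U \<Longrightarrow> el c U \<Longrightarrow> rel_m el E a b \<Longrightarrow> rel_m el E b c \<Longrightarrow> rel_m el E a c"
    and tot: "\<And>a b. el a U \<Longrightarrow> el b U \<Longrightarrow> rel_m el E a b \<or> a = b \<or> rel_m el E b a"
    and least: "\<And>S. subset_m el S U \<Longrightarrow> nonempty_m el S \<Longrightarrow> (\<exists>m. el m S \<and> (\<forall>y. el y S \<longrightarrow> \<not> rel_m el E y m))"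
    using swo unfolding strict_wellordering_m_def strict_wo_m_def by blast+
  show "\<exists>lam f. ordinal_m el lam \<and> order_iso_m el U E lam f"
  proof (cases "\<exists>a b. el a U \<and> el b U \<and> a \<noteq> b")
    case True
    then obtain a0 b0 where ab: "el a0 U" "el b0 U" "a0 \<noteq> b0" by blast
    have fld: "in_field_m el E = (\<lambda>a. el a U)"
    proof (rule HOL.ext, rule iffI)
      fix c assume "in_field_m el E c" then show "el c U"
        using EU unfolding in_field_m_def by blast
    next
      fix c assume c: "el c U"
      show "in_field_m el E c"
      proof (cases "c = a0")
        case True
        then show ?thesis using tot[OF c ab(2)] ab unfolding in_field_m_def by blast
      next
        case False
        then show ?thesis using tot[OF c ab(1)] unfolding in_field_m_def by blast
      qed
    qed
    have wf: "wf_m el E"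
      unfolding wf_m_def
    proof (intro allI impI)
      fix S assume "(\<forall>z. el z S \<longrightarrow> in_field_m el E z) \<and> nonempty_m el S"
      then show "\<exists>m. el m S \<and> (\<forall>y. el y S \<longrightarrow> \<not> rel_m el E y m)"
        using least fld unfolding subset_m_def by metis
    qed
    have exl: "extensional_m el E"
      unfolding extensional_m_def
    proof (intro allI impI)
      fix j k assume h: "in_field_m el E j \<and> in_field_m el E k \<and> (\<forall>i. rel_m el E i j \<longleftrightarrow> rel_m el E i k)"
      then have j: "el j U" and k: "el k U" using fld by metis+
      show "j = k" using tot[OF j k] h irr[OF j] irr[OF k] by blast
    qed
    obtain X \<eta> where X: "trans_m el X" and bij: "bij_m el \<eta> (in_field_m el E) (\<lambda>x. el x X)"
      and iso: "\<forall>j k x y. rel_m el \<eta> j x \<and> rel_m el \<eta> k y \<longrightarrow> (rel_m el E j k \<longleftrightarrow> el x y)"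
      using mc relE wf exl by blast
    have bij': "bij_m el \<eta> (\<lambda>a. el a U) (\<lambda>x. el x X)" using bij fld by simp
    have sv: "\<And>a b c. rel_m el \<eta> a b \<Longrightarrow> rel_m el \<eta> a c \<Longrightarrow> b = c"
      and dom: "\<And>a. (\<exists>b. rel_m el \<eta> a b) \<longleftrightarrow> el a U"
      and surj: "\<And>b. el b X \<Longrightarrow> \<exists>a. rel_m el \<eta> a b"
      using bij' unfolding bij_m_def inj_m_def fun_m_def by blast+
    have pre: "\<And>b. el b X \<Longrightarrow> \<exists>a. el a U \<and> rel_m el \<eta> a b" using surj dom by blast
    have "strict_wo_m el el X"
      unfolding strict_wo_m_def
    proof (intro conjI allI impI)
      fix a assume "el a X"
      then obtain i where "el i U" "rel_m el \<eta> i a" using pre by blast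
      then show "\<not> el a a" using iso irr by blast
    next
      fix a b c assume h: "el a X \<and> el b X \<and> el c X \<and> el a b \<and> el b c"
      then obtain i j k where "el i U" "rel_m el \<eta> i a" "el j U" "rel_m el \<eta> j b"
        "el k U" "rel_m el \<eta> k c" using pre by meson
      then show "el a c" using iso tr h by meson
    next
      fix a b assume h: "el a X \<and> el b X"
      then obtain i j where ij: "el i U" "rel_m el \<eta> i a" "el j U" "rel_m el \<eta> j b"
        using pre by meson
      show "el a b \<or> a = b \<or> el b a"
        using tot[OF ij(1) ij(3)] iso ij sv by metis
    next
      fix S assume "subset_m el S X \<and> nonempty_m el S"
      then show "\<exists>m. el m S \<and> (\<forall>y. el y S \<longrightarrow> \<not> el y m)" using reg by metis
    qed
    then have "ordinal_m el X" using X unfolding ordinal_m_def by blast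
    moreover have "order_iso_m el U E X \<eta>" using bij' iso unfolding order_iso_m_def by blast
    ultimately show ?thesis by blast
  next
    case False
    show ?thesis
    proof (cases "\<exists>a. el a U")
      case False
      have "ordinal_m el e"
        unfolding ordinal_m_def trans_m_def strict_wo_m_def subset_m_def nonempty_m_def
        using e by blast
      moreover have "order_iso_m el U E e e"
        unfolding order_iso_m_def bij_m_def inj_m_def fun_m_def relation_m_def rel_m_def
        using e False by blast
      ultimately show ?thesis by blast
    next
      case True
      then obtain a where a: "el a U" by blast
      have Ua: "\<And>b. el b U \<longleftrightarrow> b = a" using a \<open>\<not> (\<exists>a b. el a U \<and> el b U \<and> a \<noteq> b)\<close> by blast
      obtain lam where lam: "upair_m el lam e e" using pair by blast
      have lm: "\<And>z. el z lam \<longleftrightarrow> z = e" using lam unfolding upair_m_def by blast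
      obtain q where q: "opair_m el q a e" using opair_ex[OF ext pair] by blast
      obtain f where f: "upair_m el f q q" using pair by blast
      have fm: "\<And>z. el z f \<longleftrightarrow> z = q" using f unfolding upair_m_def by blast
      have rf: "\<And>x y. rel_m el f x y \<longleftrightarrow> x = a \<and> y = e"
        unfolding rel_m_def fm using q opair_inj[OF pair] by blast
      have "ordinal_m el lam"
        unfolding ordinal_m_def trans_m_def strict_wo_m_def subset_m_def nonempty_m_def lm
        using e by blast
      moreover have "order_iso_m el U E lam f"
        unfolding order_iso_m_def bij_m_def inj_m_def fun_m_def relation_m_def rf lm Ua
      proof (intro conjI allI impI)
        fix p assume "el p f" then show "\<exists>a b. opair_m el p a b" using fm q by metis
      qed (use irr[OF a] e in auto)
      ultimately show ?thesis by blast
    qed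
  qed
qed

end
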